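(* Under the utility optimization algorithm described in the context, with initial conditions $Q_a^b(0)=0$ and $E_{[a,c]}(0)=0$, for all nodes $a,b$, all links $l_{[a,c]}\in\mathcal{L}$ and all time slots $t\ge 0$: $$0\le Q_a^b(t)\le \beta V+R_{max},\qquad 0\le E_{[a,c]}(t)\le \theta_{[a,c]}+K_{max}.$$
   Context: Network: a graph $G=(\mathcal{N},\mathcal{L})$ with directed links $l_{[a,c]}$; $\mathcal{N}_a^{in}$ ($\mathcal{N}_a^{out}$) is the set of nodes with a link into (out of) $a$; $d_{max}=\max_a\max(|\mathcal{N}_a^{in}|,|\mathcal{N}_a^{out}|)$. Time is slotted, $t=0,1,2,\dots$. For each link: $K_{[a,c]}\le K_{max}$ is the key generated per slot when QKD is on; $S_{[a,c]}(t)\in\{0,1\}$ the on/off decision; $P_{[a,c]}(t)\in[0,P_{max}]$ the key consumed; $E_{[a,c]}(t)$ the key stored, with $E_{[a,c]}(t+1)=E_{[a,c]}(t)-P_{[a,c]}(t)+S_{[a,c]}(t)K_{[a,c]}$ and the constraint $E_{[a,c]}(t)\ge P_{[a,c]}(t)$. The transmission rate is $\mu_{[a,c]}(t)=\mu_{[a,c]}(P_{[a,c]}(t))\le\mu_{max}$, with a constant $\delta>0$ such that $\mu_{[a,c]}(P)\le\delta P$; it is split as $\mu_{[a,c]}(t)=\sum_b\mu^b_{[a,c]}(t)$ over data types (type-$b$ = destined to $b$). $Q_a^b(t)$ is the type-$b$ queue at $a$, $R_a^b(t)\in[0,R_{max}]$ the admitted new type-$b$ data at $a$, with $Q_a^b(t+1)=Q_a^b(t)+R_a^b(t)+\sum_{c\in\mathcal{N}_a^{in}}\mu^b_{[c,a]}(t)-\sum_{c\in\mathcal{N}_a^{out}}\mu^b_{[a,c]}(t)$.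 Utilities $U_a^b$ are concave nondecreasing; $\beta=\max_{a,b}(U_a^b)'(0)$. $V>0$ is a parameter; $\gamma=R_{max}+d_{max}\mu_{max}$; $\theta_{[a,c]}=\delta\beta V+P_{max}$. Weights: $W^b_{[a,c]}(t)=\max(Q_a^b(t)-Q_c^b(t)-\gamma,0)$, $W_{[a,c]}(t)=\max_bW^b_{[a,c]}(t)$. Algorithm, each slot $t$: (1) set $S_{[a,c]}(t)=1$ if $E_{[a,c]}(t)<\theta_{[a,c]}$, else $0$; (2) choose $R_a^b(t)\in[0,R_{max}]$ maximizing $VU_a^b(R)-Q_a^b(t)R$; (3) choose $\vec P(t)$ maximizing $\sum_{l_{[a,c]}\in\mathcal{L}}\{\mu_{[a,c]}(P_{[a,c]})W_{[a,c]}(t)+(E_{[a,c]}(t)-\theta_{[a,c]})P_{[a,c]}\}$ subject to $E_{[a,c]}(t)\ge P_{[a,c]}$; (4) pick $b^*\in\arg\max_bW^b_{[a,c]}(t)$ and, if $W^{b^*}_{[a,c]}(t)>0$, set $\mu^{b^*}_{[a,c]}(t)=\mu_{[a,c]}(t)$ (all other types get zero on that link); (5) update queues and key storage by the dynamics above. *)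

theory Defs
  imports "HOL-Analysis.Analysis"
begin

definition in_nbrs :: "'n set \<Rightarrow> ('n \<times> 'n) set \<Rightarrow> 'n \<Rightarrow> 'n set" where
  "in_nbrs N L a = {c \<in> N. (c, a) \<in> L}"

definition out_nbrs :: "'n set \<Rightarrow> ('n \<times> 'n) set \<Rightarrow> 'n \<Rightarrow> 'n set" where
  "out_nbrs N L a = {c \<in> N. (a, c) \<in> L}"

definition dmax :: "'n set \<Rightarrow> ('n \<times> 'n) set \<Rightarrow> nat" where
  "dmax N L = Max ((\<lambda>a. max (card (in_nbrs N L a)) (card (out_nbrs N L a))) ` N)"

definition weight_b :: "(nat \<Rightarrow> 'n \<Rightarrow> 'n \<Rightarrow> real) \<Rightarrow> real \<Rightarrow> nat \<Rightarrow> 'n \<Rightarrow> 'n \<Rightarrow> 'n \<Rightarrow> real" where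
  "weight_b Q \<gamma> t a c b = max (Q t a b - Q t c b - \<gamma>) 0"

definition weight :: "'n set \<Rightarrow> (nat \<Rightarrow> 'n \<Rightarrow> 'n \<Rightarrow> real) \<Rightarrow> real \<Rightarrow> nat \<Rightarrow> 'n \<Rightarrow> 'n \<Rightarrow> real" where
  "weight N Q \<gamma> t a c = Max ((\<lambda>b. weight_b Q \<gamma> t a c b) ` N)"

end

theory Submission
  imports Defs
begin

lemma tangent0:
  fixes f :: "real \<Rightarrow> real"
  assumes cv: "concave_on {0..} f" and d: "(f has_real_derivative D) (at 0 within {0..})"
    and r: "0 \<le> r"
  shows "f r \<le> f 0 + D * r"
proof (cases "r = 0")
  case True then show ?thesis by simp
next
  case False
  with r have rp: "r > 0" by simp
  have lim: "((\<lambda>y. (f y - f 0) / (y - 0)) \<longlongrightarrow> D) (at_right 0)"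
    using d unfolding has_field_derivative_iff at_within_Ici_at_right by simp
  have ev: "eventually (\<lambda>y. (f r - f 0) / r \<le> (f y - f 0) / (y - 0)) (at_right 0)"
  proof -
    have "eventually (\<lambda>y. 0 < y \<and> y < r) (at_right (0::real))"
      using eventually_at_right_real[OF rp] by simp
    then show ?thesis
    proof (rule eventually_mono)
      fix y :: real assume y: "0 < y \<and> y < r"
      define s where "s = y / r"
      have s01: "0 \<le> s" "s \<le> 1" using y rp by (auto simp: s_def)
      have cx: "convex_on {0..} (\<lambda>x. - f x)" using cv unfolding concave_on_def .
      have "- f ((1 - s) * 0 + s * r) \<le> (1 - s) * (- f 0) + s * (- f r)"
        using convex_onD[OF cx s01, of 0 r] r by simp
      moreover have "(1 - s) * 0 + s * r = y" using rp by (simp add: s_def)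
      ultimately have "f y \<ge> f 0 + s * (f r - f 0)" by (simp add: algebra_simps)
      hence "f y - f 0 \<ge> y * ((f r - f 0) / r)" by (simp add: s_def)
      thus "(f r - f 0) / r \<le> (f y - f 0) / (y - 0)" using y by (simp add: field_simps)
    qed
  qed
  have "(f r - f 0) / r \<le> D"
    by (rule tendsto_lowerbound[OF lim ev]) simp
  then show ?thesis using rp by (simp add: field_simps)
qed

theorem lemma1:
  fixes N :: "'n set" and L :: "('n \<times> 'n) set"
    and K :: "'n \<Rightarrow> 'n \<Rightarrow> real" and Kmax :: real
    and Pmax :: real and mumax :: real and \<delta> :: real
    and muf :: "'n \<Rightarrow> 'n \<Rightarrow> real \<Rightarrow> real"
    and Rmax :: real and V :: real and \<beta> :: real
    and U :: "'n \<Rightarrow> 'n \<Rightarrow> real \<Rightarrow> real" and U' :: "'n \<Rightarrow> 'n \<Rightarrow> real"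
    and \<gamma> :: real and \<theta> :: "'n \<Rightarrow> 'n \<Rightarrow> real"
    and Q :: "nat \<Rightarrow> 'n \<Rightarrow> 'n \<Rightarrow> real" and E :: "nat \<Rightarrow> 'n \<Rightarrow> 'n \<Rightarrow> real"
    and S :: "nat \<Rightarrow> 'n \<Rightarrow> 'n \<Rightarrow> real" and R :: "nat \<Rightarrow> 'n \<Rightarrow> 'n \<Rightarrow> real"
    and P :: "nat \<Rightarrow> 'n \<Rightarrow> 'n \<Rightarrow> real"
    and bstar :: "nat \<Rightarrow> 'n \<Rightarrow> 'n \<Rightarrow> 'n"
    and mub :: "nat \<Rightarrow> 'n \<Rightarrow> 'n \<Rightarrow> 'n \<Rightarrow> real"
  assumes finN: "finite N" and LN: "L \<subseteq> N \<times> N"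
    (* key generation *)
    and K_bnd: "\<And>a c. (a, c) \<in> L \<Longrightarrow> 0 \<le> K a c \<and> K a c \<le> Kmax"
    and Pmax_nn: "0 \<le> Pmax"
    (* transmission rate function *)
    and delta_pos: "\<delta> > 0"
    and mu_bnd: "\<And>a c p. (a, c) \<in> L \<Longrightarrow> 0 \<le> p \<Longrightarrow> p \<le> Pmax \<Longrightarrow>
                   0 \<le> muf a c p \<and> muf a c p \<le> mumax \<and> muf a c p \<le> \<delta> * p"
    (* utilities *)
    and U_concave: "\<And>a b. a \<in> N \<Longrightarrow> b \<in> N \<Longrightarrow> concave_on {0..} (U a b)"
    and U_mono: "\<And>a b. a \<in> N \<Longrightarrow> b \<in> N \<Longrightarrow> mono_on {0..} (U a b)"
    and U_deriv: "\<And>a b. a \<in> N \<Longrightarrow> b \<in> N \<Longrightarrow>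
                    (U a b has_real_derivative U' a b) (at 0 within {0..})"
    and beta_def: "\<beta> = Max {U' a b | a b. a \<in> N \<and> b \<in> N}"
    and V_pos: "V > 0"
    and gamma_def: "\<gamma> = Rmax + real (dmax N L) * mumax"
    and theta_def: "\<And>a c. \<theta> a c = \<delta> * \<beta> * V + Pmax"
    (* initial conditions *)
    and Q0: "\<And>a b. a \<in> N \<Longrightarrow> b \<in> N \<Longrightarrow> Q 0 a b = 0"
    and E0: "\<And>a c. (a, c) \<in> L \<Longrightarrow> E 0 a c = 0"
    (* step (1): key generation on/off *)
    and S_rule: "\<And>t a c. (a, c) \<in> L \<Longrightarrow> S t a c = (if E t a c < \<theta> a c then 1 else 0)"
    (* step (2): admission control *)
    and R_feas: "\<And>t a b. a \<in> N \<Longrightarrow> b \<in> N \<Longrightarrow> 0 \<le> R t a b \<and> R t a b \<le> Rmax"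
    and R_opt: "\<And>t a b r. a \<in> N \<Longrightarrow> b \<in> N \<Longrightarrow> 0 \<le> r \<Longrightarrow> r \<le> Rmax \<Longrightarrow>
                  V * U a b r - Q t a b * r \<le> V * U a b (R t a b) - Q t a b * R t a b"
    (* step (3): key consumption *)
    and P_feas: "\<And>t a c. (a, c) \<in> L \<Longrightarrow> 0 \<le> P t a c \<and> P t a c \<le> Pmax \<and> P t a c \<le> E t a c"
    and P_opt: "\<And>t P'. (\<forall>(a, c) \<in> L. 0 \<le> P' a c \<and> P' a c \<le> Pmax \<and> P' a c \<le> E t a c) \<Longrightarrow>
                  (\<Sum>(a, c) \<in> L. muf a c (P' a c) * weight N Q \<gamma> t a c + (E t a c - \<theta> a c) * P' a c)
                  \<le> (\<Sum>(a, c) \<in> L. muf a c (P t a c) * weight N Q \<gamma> t a c + (E t a c - \<theta> a c) * P t a c)"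
    (* step (4): routing *)
    and bstar_in: "\<And>t a c. (a, c) \<in> L \<Longrightarrow> bstar t a c \<in> N"
    and bstar_max: "\<And>t a c. (a, c) \<in> L \<Longrightarrow> weight_b Q \<gamma> t a c (bstar t a c) = weight N Q \<gamma> t a c"
    and mub_def: "\<And>t a c b. (a, c) \<in> L \<Longrightarrow>
                    mub t a c b = (if b = bstar t a c \<and> weight_b Q \<gamma> t a c b > 0
                                   then muf a c (P t a c) else 0)"
    (* step (5): dynamics *)
    and E_step: "\<And>t a c. (a, c) \<in> L \<Longrightarrow> E (Suc t) a c = E t a c - P t a c + S t a c * K a c"
    and Q_step: "\<And>t a b. a \<in> N \<Longrightarrow> b \<in> N \<Longrightarrow>
                   Q (Suc t) a b = Q t a b + R t a b
                     + (\<Sum>c \<in> in_nbrs N L a. mub t c a b) - (\<Sum>c \<in> out_nbrs N L a. mub t a c b)"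
  shows "(\<forall>t a b. a \<in> N \<longrightarrow> b \<in> N \<longrightarrow> 0 \<le> Q t a b \<and> Q t a b \<le> \<beta> * V + Rmax) \<and>
         (\<forall>t a c. (a, c) \<in> L \<longrightarrow> 0 \<le> E t a c \<and> E t a c \<le> \<theta> a c + Kmax)"
proof -
  have bnds: "\<And>a b. a \<in> N \<Longrightarrow> b \<in> N \<Longrightarrow> U' a b \<le> \<beta> \<and> 0 \<le> U' a b"
  proof -
    fix a b assume ab: "a \<in> N" "b \<in> N"
    have fin: "finite {U' a b | a b. a \<in> N \<and> b \<in> N}"
    proof -
      have "{U' a b | a b. a \<in> N \<and> b \<in> N} = (\<lambda>(a,b). U' a b) ` (N \<times> N)" by auto
      thus ?thesis using finN by simp
    qed
    have "U' a b \<le> \<beta>" unfolding beta_def using ab by (intro Max_ge[OF fin]) auto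
    moreover have "U a b 1 \<le> U a b 0 + U' a b * 1"
      by (rule tangent0[OF U_concave[OF ab] U_deriv[OF ab]]) simp
    moreover have "U a b 0 \<le> U a b 1" using U_mono[OF ab] by (auto intro: mono_onD)
    ultimately show "U' a b \<le> \<beta> \<and> 0 \<le> U' a b" by simp
  qed
  have Rzero: "R t a b = 0" if ab: "a \<in> N" "b \<in> N" and q: "Q t a b > \<beta> * V" for t a b
  proof -
    have R0: "0 \<le> R t a b" "R t a b \<le> Rmax" using R_feas[OF ab] by auto
    have "V * U a b 0 - Q t a b * 0 \<le> V * U a b (R t a b) - Q t a b * R t a b"
      using R_opt[OF ab, of 0 t] R0 by simp
    moreover have "U a b (R t a b) \<le> U a b 0 + U' a b * R t a b"
      by (rule tangent0[OF U_concave[OF ab] U_deriv[OF ab] R0(1)])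
    ultimately have "0 \<le> V * U' a b * R t a b - Q t a b * R t a b"
      using V_pos by (smt (verit) mult_left_mono right_diff_distrib mult.assoc distrib_left)
    moreover have "V * U' a b * R t a b \<le> V * \<beta> * R t a b"
      using bnds[OF ab] V_pos R0 by (simp add: mult_right_mono)
    ultimately have "0 \<le> (V * \<beta> - Q t a b) * R t a b" by (simp add: algebra_simps)
    moreover have "V * \<beta> - Q t a b < 0" using q by (simp add: mult.commute)
    ultimately show ?thesis using R0(1) by (smt (verit) mult_neg_pos)
  qed
  have cardb: "card (in_nbrs N L a) \<le> dmax N L \<and> card (out_nbrs N L a) \<le> dmax N L" if "a \<in> N" for a
  proof -
    have "max (card (in_nbrs N L a)) (card (out_nbrs N L a)) \<le> dmax N L"
      unfolding dmax_def using that finN by (intro Max_ge) auto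
    thus ?thesis by simp
  qed
  have finin: "finite (in_nbrs N L a)" and finout: "finite (out_nbrs N L a)" for a
    using finN unfolding in_nbrs_def out_nbrs_def by auto
  have mub_bnd: "0 \<le> mub t a c b \<and> mub t a c b \<le> mumax" if "(a, c) \<in> L" for t a c b
  proof -
    have "0 \<le> muf a c (P t a c) \<and> muf a c (P t a c) \<le> mumax"
      using mu_bnd[OF that] P_feas[OF that] by auto
    moreover have "0 \<le> mumax" using mu_bnd[OF that, of 0] Pmax_nn by auto
    ultimately show ?thesis using mub_def[OF that] by auto
  qed
  have mub_pos: "weight_b Q \<gamma> t a c b > 0" if "(a, c) \<in> L" "mub t a c b \<noteq> 0" for t a c b
    using mub_def[OF that(1)] that(2) by (auto split: if_splits)
  have Qb: "\<forall>a b. a \<in> N \<longrightarrow> b \<in> N \<longrightarrow> 0 \<le> Q t a b \<and> Q t a b \<le> \<beta> * V + Rmax" for t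
  proof (induction t)
    case 0
    show ?case
    proof (intro allI impI)
      fix a b assume ab: "a \<in> N" "b \<in> N"
      have "0 \<le> \<beta>" using bnds[OF ab] by simp
      moreover have "0 \<le> Rmax" using R_feas[OF ab, of 0] by simp
      ultimately show "0 \<le> Q 0 a b \<and> Q 0 a b \<le> \<beta> * V + Rmax" using Q0[OF ab] V_pos by simp
    qed
  next
    case (Suc t)
    show ?case
    proof (intro allI impI)
      fix a b assume ab: "a \<in> N" "b \<in> N"
      have beta0: "0 \<le> \<beta>" using bnds[OF ab] by simp
      have R0: "0 \<le> R t a b" "R t a b \<le> Rmax" using R_feas[OF ab] by auto
      define In where "In = (\<Sum>c \<in> in_nbrs N L a. mub t c a b)"
      define Out where "Out = (\<Sum>c \<in> out_nbrs N L a. mub t a c b)"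
      have step: "Q (Suc t) a b = Q t a b + R t a b + In - Out"
        using Q_step[OF ab] by (simp add: In_def Out_def)
      have In0: "0 \<le> In" unfolding In_def
        by (intro sum_nonneg) (use mub_bnd in \<open>auto simp: in_nbrs_def\<close>)
      have Out0: "0 \<le> Out" unfolding Out_def
        by (intro sum_nonneg) (use mub_bnd in \<open>auto simp: out_nbrs_def\<close>)
      have IH: "0 \<le> Q t a b" "Q t a b \<le> \<beta> * V + Rmax" using Suc ab by auto
      have lower: "0 \<le> Q (Suc t) a b"
      proof (cases "\<exists>c \<in> out_nbrs N L a. mub t a c b \<noteq> 0")
        case True
        then obtain c where c: "c \<in> out_nbrs N L a" "mub t a c b \<noteq> 0" by blast
        have ac: "(a, c) \<in> L" and cN: "c \<in> N" using c(1) by (auto simp: out_nbrs_def)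
        have "weight_b Q \<gamma> t a c b > 0" by (rule mub_pos[OF ac c(2)])
        hence gt: "Q t a b - Q t c b - \<gamma> > 0" unfolding weight_b_def by simp
        have "0 \<le> Q t c b" using Suc cN ab by auto
        have mu0: "0 \<le> mumax" using mub_bnd[OF ac] by (meson order_trans)
        have "Out \<le> (\<Sum>c \<in> out_nbrs N L a. mumax)" unfolding Out_def
          by (intro sum_mono) (use mub_bnd in \<open>auto simp: out_nbrs_def\<close>)
        also have "\<dots> = real (card (out_nbrs N L a)) * mumax" by simp
        also have "\<dots> \<le> real (dmax N L) * mumax"
          using cardb[OF ab(1)] mu0 by (intro mult_right_mono) auto
        finally have "Out \<le> \<gamma>" using gamma_def R0 by simp
        then show ?thesis using step gt \<open>0 \<le> Q t c b\<close> R0 In0 by linarith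
      next
        case False
        hence "Out = 0" unfolding Out_def by simp
        then show ?thesis using step IH R0 In0 by linarith
      qed
      have upper: "Q (Suc t) a b \<le> \<beta> * V + Rmax"
      proof (cases "\<exists>c \<in> in_nbrs N L a. mub t c a b \<noteq> 0")
        case True
        then obtain c where c: "c \<in> in_nbrs N L a" "mub t c a b \<noteq> 0" by blast
        have ca: "(c, a) \<in> L" and cN: "c \<in> N" using c(1) by (auto simp: in_nbrs_def)
        have "weight_b Q \<gamma> t c a b > 0" by (rule mub_pos[OF ca c(2)])
        hence gt: "Q t c b - Q t a b - \<gamma> > 0" unfolding weight_b_def by simp
        have "Q t c b \<le> \<beta> * V + Rmax" using Suc cN ab by auto
        have mu0: "0 \<le> mumax" using mub_bnd[OF ca] by (meson order_trans)
        have "In \<le> (\<Sum>c \<in> in_nbrs N L a. mumax)" unfolding In_def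
          by (intro sum_mono) (use mub_bnd in \<open>auto simp: in_nbrs_def\<close>)
        also have "\<dots> = real (card (in_nbrs N L a)) * mumax" by simp
        also have "\<dots> \<le> real (dmax N L) * mumax"
          using cardb[OF ab(1)] mu0 by (intro mult_right_mono) auto
        finally have "In \<le> \<gamma> - Rmax" using gamma_def by simp
        then show ?thesis using step gt \<open>Q t c b \<le> \<beta> * V + Rmax\<close> R0 Out0 by linarith
      next
        case False
        hence In00: "In = 0" unfolding In_def by simp
        show ?thesis
        proof (cases "Q t a b > \<beta> * V")
          case True
          then show ?thesis using Rzero[OF ab True] step In00 Out0 IH by linarith
        next
          case False
          then show ?thesis using step In00 Out0 R0 by linarith
        qed
      qed
      show "0 \<le> Q (Suc t) a b \<and> Q (Suc t) a b \<le> \<beta> * V + Rmax" using lower upper by simp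
    qed
  qed
  have Eb: "\<forall>a c. (a, c) \<in> L \<longrightarrow> 0 \<le> E t a c \<and> E t a c \<le> \<theta> a c + Kmax" for t
  proof (induction t)
    case 0
    show ?case
    proof (intro allI impI)
      fix a c assume ac: "(a, c) \<in> L"
      have "0 \<le> Kmax" using K_bnd[OF ac] by linarith
      moreover have "a \<in> N" using LN ac by auto
      hence "0 \<le> \<beta>" using bnds[of a a] by auto
      ultimately show "0 \<le> E 0 a c \<and> E 0 a c \<le> \<theta> a c + Kmax"
        using E0[OF ac] theta_def[of a c] delta_pos V_pos Pmax_nn by simp
    qed
  next
    case (Suc t)
    show ?case
    proof (intro allI impI)
      fix a c assume ac: "(a, c) \<in> L"
      have IH: "0 \<le> E t a c" "E t a c \<le> \<theta> a c + Kmax" using Suc ac by auto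
      show "0 \<le> E (Suc t) a c \<and> E (Suc t) a c \<le> \<theta> a c + Kmax"
        using E_step[OF ac, of t] S_rule[OF ac, of t] K_bnd[OF ac] P_feas[OF ac, of t] IH
        by (cases "E t a c < \<theta> a c") auto
    qed
  qed
  show ?thesis using Qb Eb by blast
qed

end
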